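(* Let $q=p^m$ with $p$ an odd prime, $q\equiv 1\pmod 3$, $q\geq 13$. In the graph $C_P(q)$: (a) for all nonzero $r,s\in GF(q)$, the induced subgraphs $[P_r]$ and $[P_s]$ are isomorphic; (b) for every nonzero $r$ and distinct $i,j\in GF(q)$, the edge set of $[B_i(r)\cup B_j(r)]$ is a perfect matching between $B_i(r)$ and $B_j(r)$; (c) for every nonzero $r$, $[P_r]$ is regular of degree $q-1$; (d) for every non-isolated vertex $v$ of $C_P(q)$, the subgraph induced by the set $N(v)$ of neighbors of $v$ is $2$-regular, i.e. a disjoint union of cycles.
   Context: $PGL(2,q)$ is the group of maps $x\mapsto\frac{ax+b}{cx+d}$ ($a,b,c,d\in GF(q)$, $ad\neq bc$) acting on $GF(q)\cup\{\infty\}$ with the usual conventions ($-d/c\mapsto\infty$, $\infty\mapsto a/c$ if $c\neq0$, $\infty\mapsto\infty$ if $c=0$). For $K,i\in GF(q)$ and $r\in GF(q)\setminus\{0\}$, $f_{K,r,i}$ is the element of $PGL(2,q)$ with $f_{K,r,i}(x)=K+\frac{r}{x-i}$ for $x\notin\{i,\infty\}$, $f_{K,r,i}(\infty)=K$, $f_{K,r,i}(i)=\infty$. For $r\neq0$, $P_r=\{f_{a,r,i}: a,i\in GF(q)\}$ and $B_i(r)=\{f_{a,r,i}:a\in GF(q)\}$. $hd(\pi,\sigma)$ is the number of points at which $\pi,\sigma$ differ. With distinguished element $F=\infty$, $\pi^{\triangle}$ is the permutation with $\pi^{\triangle}(\pi^{-1}(\infty))=\pi(\infty)$, $\pi^{\triangle}(\infty)=\infty$,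 $\pi^{\triangle}(x)=\pi(x)$ otherwise. The contraction graph $C_P(q)$ has vertex set $PGL(2,q)$, with distinct $\pi,\sigma$ adjacent iff $hd(\pi^{\triangle},\sigma^{\triangle})=q-4$. For a vertex set $S$, $[S]$ denotes the induced subgraph of $C_P(q)$ on $S$. *)

theory Defs
  imports Main "HOL-Computational_Algebra.Primes"
begin

text \<open>The projective line GF(q) \<union> {\<infinity>} is modelled as 'a option, with None = \<infinity>.\<close>

definition mob :: "'a::field \<Rightarrow> 'a \<Rightarrow> 'a \<Rightarrow> 'a \<Rightarrow> 'a option \<Rightarrow> 'a option" where
  "mob a b c d z =
     (if c = 0 then
        (case z of None \<Rightarrow> None | Some x \<Rightarrow> Some ((a * x + b) / d))
      else
        (case z of None \<Rightarrow> Some (a / c)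
         | Some x \<Rightarrow> (if c * x + d = 0 then None else Some ((a * x + b) / (c * x + d)))))"

definition PGL2 :: "('a::field option \<Rightarrow> 'a option) set" where
  "PGL2 = {mob a b c d | a b c d. a * d \<noteq> b * c}"

definition fKri :: "'a::field \<Rightarrow> 'a \<Rightarrow> 'a \<Rightarrow> 'a option \<Rightarrow> 'a option" where
  "fKri K r i z = (case z of None \<Rightarrow> Some K
                   | Some x \<Rightarrow> (if x = i then None else Some (K + r / (x - i))))"

definition Pr :: "'a::field \<Rightarrow> ('a option \<Rightarrow> 'a option) set" where
  "Pr r = {fKri a r i | a i. True}"

definition Bir :: "'a::field \<Rightarrow> 'a \<Rightarrow> ('a option \<Rightarrow> 'a option) set" where
  "Bir i r = {fKri a r i | a. True}"

definition hdist :: "('b \<Rightarrow> 'b) \<Rightarrow> ('b \<Rightarrow> 'b) \<Rightarrow> nat" where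
  "hdist \<pi> \<sigma> = card {x. \<pi> x \<noteq> \<sigma> x}"

text \<open>Contraction with distinguished element F = \<infinity> = None.\<close>
definition tri :: "('a option \<Rightarrow> 'a option) \<Rightarrow> 'a option \<Rightarrow> 'a option" where
  "tri \<pi> z = (if z = None then None else if \<pi> z = None then \<pi> None else \<pi> z)"

text \<open>Adjacency in the contraction graph C_P(q), q = CARD('a).\<close>
definition adjC :: "('a::{finite,field} option \<Rightarrow> 'a option) \<Rightarrow> ('a option \<Rightarrow> 'a option) \<Rightarrow> bool" where
  "adjC \<pi> \<sigma> \<longleftrightarrow> \<pi> \<in> PGL2 \<and> \<sigma> \<in> PGL2 \<and> \<pi> \<noteq> \<sigma> \<and> hdist (tri \<pi>) (tri \<sigma>) = card (UNIV :: 'a set) - 4"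

definition nbhd :: "('a::{finite,field} option \<Rightarrow> 'a option) \<Rightarrow> ('a option \<Rightarrow> 'a option) set" where
  "nbhd v = {u. adjC v u}"

end

theory Submission imports Defs "HOL-Computational_Algebra.Polynomial"
begin

definition aff :: "'a::field \<Rightarrow> 'a \<Rightarrow> 'a option \<Rightarrow> 'a option" where
  "aff al be z = map_option (\<lambda>x. al * x + be) z"

definition agree :: "('a option \<Rightarrow> 'a option) \<Rightarrow> ('a option \<Rightarrow> 'a option) \<Rightarrow> 'a set" where
  "agree \<pi> \<sigma> = {x. tri \<pi> (Some x) = tri \<sigma> (Some x)}"

lemma tri_fKri: "tri (fKri K r i) (Some x) = Some (if x = i then K else K + r / (x - i))"
  by (simp add: tri_def fKri_def)

lemma tri_aff: "tri (aff a b) (Some x) = Some (a * x + b)"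
  by (simp add: tri_def aff_def)

lemma fKri_PGL2: assumes "r \<noteq> 0" shows "fKri K r i \<in> PGL2"
proof -
  have "fKri K r i = mob K (r - K*i) 1 (-i)"
  proof
    fix z show "fKri K r i z = mob K (r - K*i) 1 (-i) z"
    proof (cases z)
      case None then show ?thesis by (simp add: fKri_def mob_def)
    next
      case (Some x)
      show ?thesis
      proof (cases "x = i")
        case True then show ?thesis using Some by (simp add: fKri_def mob_def)
      next
        case False
        then have "x - i \<noteq> 0" "x + - i \<noteq> 0" by auto
        then show ?thesis using Some False by (simp add: fKri_def mob_def field_simps)
      qed
    qed
  qed
  moreover have "K * (-i) \<noteq> (r - K*i) * 1" using assms by (simp add: algebra_simps)
  ultimately show ?thesis unfolding PGL2_def by blast
qed

lemma PGL2_cases: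
  assumes "\<pi> \<in> PGL2"
  shows "(\<exists>al be. al \<noteq> 0 \<and> \<pi> = aff al be) \<or> (\<exists>K r i. r \<noteq> 0 \<and> \<pi> = fKri K r i)"
proof -
  obtain a b c d where pi: "\<pi> = mob a b c d" and det: "a * d \<noteq> b * c"
    using assms unfolding PGL2_def by blast
  show ?thesis
  proof (cases "c = 0")
    case True
    then have "a \<noteq> 0" "d \<noteq> 0" using det by auto
    have "\<pi> = aff (a/d) (b/d)"
    proof
      fix z show "\<pi> z = aff (a/d) (b/d) z"
        using True \<open>d \<noteq> 0\<close> by (cases z) (simp_all add: pi mob_def aff_def field_simps)
    qed
    moreover have "a/d \<noteq> 0" using \<open>a \<noteq> 0\<close> \<open>d \<noteq> 0\<close> by simp
    ultimately show ?thesis by blast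
  next
    case False
    have r0: "(b*c - a*d)/c^2 \<noteq> 0" using det False by auto
    have "\<pi> = fKri (a/c) ((b*c - a*d)/c^2) (-d/c)"
    proof
      fix z show "\<pi> z = fKri (a/c) ((b*c - a*d)/c^2) (-d/c) z"
      proof (cases z)
        case None then show ?thesis using False by (simp add: pi mob_def fKri_def)
      next
        case (Some x)
        have eq: "c * x + d = 0 \<longleftrightarrow> x = -d/c" using False by (auto simp: field_simps) (metis add_eq_0_iff2 add.commute)
        show ?thesis
        proof (cases "x = -d/c")
          case True then show ?thesis using Some eq False by (simp add: pi mob_def fKri_def)
        next
          case F: False
          then have ne: "c * x + d \<noteq> 0" using eq by auto
          have ne2: "x - -d/c \<noteq> 0" using F right_minus_eq by blast
          have e1: "x - -d/c = (c*x+d)/c" using False by (simp add: field_simps)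
          have "a/c + (b*c - a*d)/c^2 / (x - -d/c) = a/c + (b*c-a*d)/(c*(c*x+d))"
            using e1 False ne by (simp add: power2_eq_square)
          also have "\<dots> = (a*(c*x+d) + (b*c-a*d))/(c*(c*x+d))"
          proof -
            have m: "a/c = (a*(c*x+d))/(c*(c*x+d))" using ne by simp
            show ?thesis unfolding m by (simp only: add_divide_distrib)
          qed
          also have "\<dots> = (c*(a*x+b))/(c*(c*x+d))" by (simp add: algebra_simps)
          also have "\<dots> = (a*x+b)/(c*x+d)" using False by simp
          finally have "(a * x + b) / (c * x + d) = a/c + (b*c - a*d)/c^2 / (x - -d/c)" by simp
          then show ?thesis using Some F ne False by (simp add: pi mob_def fKri_def)
        qed
      qed
    qed
    then show ?thesis using r0 by blast
  qed
qed

lemma quad_bound: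
  fixes a b c :: "'a::field"
  assumes "a \<noteq> 0 \<or> b \<noteq> 0 \<or> c \<noteq> 0"
  shows "card {x. a*x*x + b*x + c = 0} \<le> 2"
proof -
  let ?p = "[:c, b, a:]"
  have p0: "?p \<noteq> 0" using assms by auto
  have "degree ?p \<le> 2" by simp
  moreover have "{x. a*x*x + b*x + c = 0} = {x. poly ?p x = 0}"
    by (auto simp: algebra_simps)
  ultimately show ?thesis using card_poly_roots_bound[OF p0] by simp
qed

lemma hdist_agree:
  fixes \<pi> \<sigma> :: "'a::{finite,field} option \<Rightarrow> 'a option"
  shows "hdist (tri \<pi>) (tri \<sigma>) = card (UNIV::'a set) - card (agree \<pi> \<sigma>)"
proof -
  have "{z. tri \<pi> z \<noteq> tri \<sigma> z} = Some ` (- agree \<pi> \<sigma>)"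
  proof (rule set_eqI)
    fix z show "z \<in> {z. tri \<pi> z \<noteq> tri \<sigma> z} \<longleftrightarrow> z \<in> Some ` (- agree \<pi> \<sigma>)"
      by (cases z) (auto simp: agree_def tri_def)
  qed
  then have "hdist (tri \<pi>) (tri \<sigma>) = card (- agree \<pi> \<sigma>)"
    unfolding hdist_def by (simp add: card_image)
  also have "\<dots> = card (UNIV::'a set) - card (agree \<pi> \<sigma>)"
    by (simp add: Compl_eq_Diff_UNIV card_Diff_subset)
  finally show ?thesis .
qed

lemma adjC_iff:
  fixes \<pi> \<sigma> :: "'a::{finite,field} option \<Rightarrow> 'a option"
  assumes "card (UNIV::'a set) \<ge> 4"
  shows "adjC \<pi> \<sigma> \<longleftrightarrow> \<pi> \<in> PGL2 \<and> \<sigma> \<in> PGL2 \<and> \<pi> \<noteq> \<sigma> \<and> card (agree \<pi> \<sigma>) = 4"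
proof -
  have "card (agree \<pi> \<sigma>) \<le> card (UNIV::'a set)" by (rule card_mono) auto
  then show ?thesis using assms unfolding adjC_def hdist_agree by auto
qed

lemma adjC_sym: "adjC \<pi> \<sigma> \<longleftrightarrow> adjC \<sigma> \<pi>"
  unfolding adjC_def hdist_def by (auto simp: eq_commute)

lemma card_le3:
  assumes "S \<subseteq> A \<union> R" "card A \<le> 1" "card R \<le> 2" "finite A" "finite R"
  shows "card S \<le> 3"
proof -
  have "card S \<le> card (A \<union> R)" using assms by (intro card_mono) auto
  also have "\<dots> \<le> card A + card R" by (rule card_Un_le)
  finally show ?thesis using assms by simp
qed

lemma agree_mid:
  fixes K K' r s x i j :: "'a::field"
  assumes "x \<noteq> i" "x \<noteq> j"
  shows "(K + r/(x-i) = K' + s/(x-j)) \<longleftrightarrow> (K-K')*(x-i)*(x-j) + r*(x-j) - s*(x-i) = 0"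
proof -
  have a: "x - i \<noteq> 0" "x - j \<noteq> 0" using assms by auto
  have "(K + r/(x-i) = K' + s/(x-j)) \<longleftrightarrow> (K + r/(x-i))*((x-i)*(x-j)) = (K' + s/(x-j))*((x-i)*(x-j))"
    using a by simp
  also have "(K + r/(x-i))*((x-i)*(x-j)) = K*(x-i)*(x-j) + (r/(x-i)*(x-i))*(x-j)"
    by (simp only: distrib_right mult.assoc)
  also have "r/(x-i)*(x-i) = r" using a by simp
  also have "(K' + s/(x-j))*((x-i)*(x-j)) = K'*(x-i)*(x-j) + (s/(x-j)*(x-j))*(x-i)"
    by (simp only: distrib_right mult.assoc mult.commute[of "x-i" "x-j"])
  also have "s/(x-j)*(x-j) = s" using a by simp
  finally show ?thesis by (simp add: algebra_simps)
qed

lemma agree_ff_le3: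
  fixes K K' r s i j :: "'a::{finite,field}"
  assumes r0: "r \<noteq> 0" and s0: "s \<noteq> 0"
    and nc: "\<not> (r = s \<and> i \<noteq> j \<and> (K-K')*(i-j) = r)"
    and ne: "fKri K r i \<noteq> fKri K' s j"
  shows "card (agree (fKri K r i) (fKri K' s j)) \<le> 3"
proof (cases "i = j")
  case True
  have nz: "K - K' \<noteq> 0 \<or> (r - s) - (K-K')*i \<noteq> 0"
  proof (rule ccontr)
    assume "\<not> ?thesis"
    then have "K = K'" "r = s" by auto
    then show False using ne True by simp
  qed
  let ?R = "{x. 0*x*x + (K-K')*x + ((r - s) - (K-K')*i) = 0}"
  have "agree (fKri K r i) (fKri K' s j) \<subseteq> {i} \<union> ?R"
  proof
    fix x assume x: "x \<in> agree (fKri K r i) (fKri K' s j)"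
    show "x \<in> {i} \<union> ?R"
    proof (cases "x = i")
      case False
      then have xi: "x - i \<noteq> 0" by simp
      from x False True have "K + r/(x-i) = K' + s/(x-i)" by (simp add: agree_def tri_fKri)
      then have "(K + r/(x-i))*(x-i) = (K' + s/(x-i))*(x-i)" by simp
      then have "K*(x-i) + r/(x-i)*(x-i) = K'*(x-i) + s/(x-i)*(x-i)" by (simp only: distrib_right)
      then have "K*(x-i) + r = K'*(x-i) + s" using xi by simp
      then have "0*x*x + (K-K')*x + ((r - s) - (K-K')*i) = 0" by (simp add: algebra_simps)
      then show ?thesis by simp
    qed simp
  qed
  from card_le3[OF this] quad_bound[of 0 "K-K'" "(r - s) - (K-K')*i"] nz
  show ?thesis by simp
next
  case False
  define d where "d = K - K'"
  have ij: "i - j \<noteq> 0" using False by simp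
  let ?a = d and ?b = "r - s - d*(i+j)" and ?c = "d*i*j - r*j + s*i"
  have nz: "?a \<noteq> 0 \<or> ?b \<noteq> 0 \<or> ?c \<noteq> 0"
  proof (rule ccontr)
    assume "\<not> ?thesis"
    then have "d = 0" "r = s" "?c = 0" by auto
    then have "r * (i - j) = 0" by (simp add: algebra_simps)
    then show False using r0 ij by simp
  qed
  let ?R = "{x. ?a*x*x + ?b*x + ?c = 0}"
  define A where "A = (if d*(i-j) = r then {j} else {i})"
  have "agree (fKri K r i) (fKri K' s j) \<subseteq> A \<union> ?R"
  proof
    fix x assume x: "x \<in> agree (fKri K r i) (fKri K' s j)"
    show "x \<in> A \<union> ?R"
    proof (cases "x = i")
      case True
      then have "K = K' + s/(i-j)" using x False by (simp add: agree_def tri_fKri)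
      then have "d*(i-j) = s" using ij unfolding d_def by (simp add: field_simps)
      then have "d*(i-j) \<noteq> r" using nc False d_def by auto
      then show ?thesis using True A_def by simp
    next
      case xi: False
      show ?thesis
      proof (cases "x = j")
        case True
        then have "K + r/(j-i) = K'" using x False by (simp add: agree_def tri_fKri)
        then have "K - K' + r/(j-i) = 0" by (simp add: algebra_simps)
        then have "(K - K')*(j-i) + r/(j-i)*(j-i) = 0" by (metis distrib_right mult_zero_left)
        moreover have "j - i \<noteq> 0" using False by simp
        ultimately have "d*(j-i) + r = 0" unfolding d_def by simp
        then have "d*(i-j) = r" by (simp add: algebra_simps)
        then show ?thesis using True A_def by simp
      next
        case xj: False
        from x xi xj have "K + r/(x-i) = K' + s/(x-j)" by (simp add: agree_def tri_fKri)
        then have "(K-K')*(x-i)*(x-j) + r*(x-j) - s*(x-i) = 0" using agree_mid[OF xi xj] by simp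
        then have "?a*x*x + ?b*x + ?c = 0" unfolding d_def by (simp add: algebra_simps)
        then show ?thesis by simp
      qed
    qed
  qed
  from card_le3[OF this] quad_bound[OF nz] show ?thesis by (simp add: A_def)
qed

lemma omega_fact:
  fixes w e y :: "'a::field"
  assumes "w*w + w + 1 = 0"
  shows "(y - e)*y + e*e = (y + w*e)*(y + w*w*e)"
proof -
  have "(y + w*e)*(y + w*w*e) = (y - e)*y + e*e + (w*w + w + 1)*(e*y + (w - 1)*e*e)"
    by (simp add: algebra_simps)
  then show ?thesis using assms by simp
qed

lemma agree_ff_4:
  fixes K K' r i j w :: "'a::{finite,field}"
  assumes r0: "r \<noteq> 0" and ij: "i \<noteq> j" and rel: "(K-K')*(i-j) = r"
    and w: "w*w + w + 1 = 0" and w1: "w \<noteq> 1"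
  shows "card (agree (fKri K r i) (fKri K' r j)) = 4"
proof -
  define e where "e = i - j"
  define d where "d = K - K'"
  have e0: "e \<noteq> 0" using ij e_def by simp
  have d0: "d \<noteq> 0" using rel r0 d_def by auto
  have re: "r = d*e" using rel d_def e_def by simp
  have mid: "x \<in> agree (fKri K r i) (fKri K' r j) \<longleftrightarrow> (x - j + w*e)*(x - j + w*w*e) = 0"
    if xi: "x \<noteq> i" and xj: "x \<noteq> j" for x
  proof -
    have "x \<in> agree (fKri K r i) (fKri K' r j) \<longleftrightarrow> K + r/(x-i) = K' + r/(x-j)"
      using xi xj by (simp add: agree_def tri_fKri)
    also have "\<dots> \<longleftrightarrow> d*(x-i)*(x-j) + r*(x-j) - r*(x-i) = 0"
      using agree_mid[OF xi xj] d_def by simp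
    also have "d*(x-i)*(x-j) + r*(x-j) - r*(x-i) = d*(((x-j) - e)*(x-j) + e*e)"
      unfolding re e_def by (simp add: algebra_simps)
    also have "((x-j) - e)*(x-j) + e*e = (x - j + w*e)*(x - j + w*w*e)"
      using omega_fact[OF w] by simp
    finally show ?thesis using d0 by simp
  qed
  have wm1: "w \<noteq> -1" using w by auto
  have w0: "w \<noteq> 0" using w by auto
  have ww0: "w*w \<noteq> 0" using w0 by simp
  have wwm1: "w*w \<noteq> -1"
  proof
    assume "w*w = -1" then have "w = 0" using w by (simp add: algebra_simps)
    then show False using w0 by simp
  qed
  have www: "w \<noteq> w*w"
  proof
    assume "w = w*w" then have "w*(w - 1) = 0" by (simp add: algebra_simps)
    then show False using w0 w1 by simp
  qed
  let ?x1 = "j - w*e" and ?x2 = "j - w*w*e"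
  have n1: "?x1 \<noteq> i"
  proof
    assume h: "?x1 = i"
    have "(w + 1)*e = i - ?x1" by (simp add: e_def algebra_simps)
    then have "(w + 1)*e = 0" using h by simp
    then show False using e0 wm1 by (simp add: add_eq_0_iff2)
  qed
  have n2: "?x2 \<noteq> i"
  proof
    assume h: "?x2 = i"
    have "(w*w + 1)*e = i - ?x2" by (simp add: e_def algebra_simps)
    then have "(w*w + 1)*e = 0" using h by simp
    then have "w*w + 1 = 0" using e0 by simp
    then show False using wwm1 by (simp add: add_eq_0_iff2)
  qed
  have n3: "?x1 \<noteq> j" using w0 e0 by simp
  have n4: "?x2 \<noteq> j" using ww0 e0 by simp
  have n5: "?x1 \<noteq> ?x2"
  proof
    assume h: "?x1 = ?x2"
    have "(w - w*w)*e = ?x2 - ?x1" by (simp add: algebra_simps)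
    then have "(w - w*w)*e = 0" using h by simp
    then show False using www e0 by simp
  qed
  have ai: "i \<in> agree (fKri K r i) (fKri K' r j)"
  proof -
    have "K = K' + r/(i-j)" using rel ij by (simp add: field_simps)
    then show ?thesis using ij by (simp add: agree_def tri_fKri)
  qed
  have aj: "j \<in> agree (fKri K r i) (fKri K' r j)"
  proof -
    have "K + r/(j-i) = K'" using rel ij by (simp add: field_simps)
    then show ?thesis using ij by (simp add: agree_def tri_fKri)
  qed
  have "agree (fKri K r i) (fKri K' r j) = {i, j, ?x1, ?x2}"
  proof (rule set_eqI)
    fix x
    show "x \<in> agree (fKri K r i) (fKri K' r j) \<longleftrightarrow> x \<in> {i, j, ?x1, ?x2}"
    proof (cases "x = i \<or> x = j")
      case True then show ?thesis using ai aj by auto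
    next
      case False
      then have "x \<in> agree (fKri K r i) (fKri K' r j) \<longleftrightarrow> (x - j + w*e)*(x - j + w*w*e) = 0"
        using mid by auto
      also have "\<dots> \<longleftrightarrow> x - j + w*e = 0 \<or> x - j + w*w*e = 0" by (rule mult_eq_0_iff)
      also have "\<dots> \<longleftrightarrow> x = ?x1 \<or> x = ?x2"
      proof -
        have aux: "(x - j + a = 0) = (x = j - a)" for a
        proof -
          have "x - j + a = x - (j - a)" by (simp add: algebra_simps)
          then show ?thesis by (metis right_minus_eq)
        qed
        show ?thesis by (simp only: aux)
      qed
      finally show ?thesis using False by auto
    qed
  qed
  then show ?thesis using n1 n2 n3 n4 n5 ij by auto
qed

lemma agree_aff_f_le3:
  fixes al be K s j :: "'a::{finite,field}"
  assumes "al \<noteq> 0"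
  shows "card (agree (aff al be) (fKri K s j)) \<le> 3"
proof -
  let ?R = "{x. al*x*x + (be - K - al*j)*x + (-(be-K)*j - s) = 0}"
  have "agree (aff al be) (fKri K s j) \<subseteq> {j} \<union> ?R"
  proof
    fix x assume x: "x \<in> agree (aff al be) (fKri K s j)"
    show "x \<in> {j} \<union> ?R"
    proof (cases "x = j")
      case False
      then have xj: "x - j \<noteq> 0" by simp
      from x False have "al*x + be = K + s/(x-j)" by (simp add: agree_def tri_fKri tri_aff)
      then have "(al*x + be)*(x-j) = K*(x-j) + s/(x-j)*(x-j)" by (simp add: distrib_right)
      then have "(al*x + be)*(x-j) = K*(x-j) + s" using xj by simp
      then have "al*x*x + (be - K - al*j)*x + (-(be-K)*j - s) = 0" by (simp add: algebra_simps)
      then show ?thesis by simp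
    qed simp
  qed
  from card_le3[OF this] quad_bound[of al] assms show ?thesis by simp
qed

lemma agree_aff_aff_le3:
  fixes al be ga de :: "'a::{finite,field}"
  assumes "aff al be \<noteq> aff ga de"
  shows "card (agree (aff al be) (aff ga de)) \<le> 3"
proof -
  have nz: "0 \<noteq> (0::'a) \<or> al - ga \<noteq> 0 \<or> be - de \<noteq> 0"
    using assms by auto
  have "agree (aff al be) (aff ga de) \<subseteq> {} \<union> {x. 0*x*x + (al-ga)*x + (be - de) = 0}"
    by (auto simp: agree_def tri_aff algebra_simps)
  from card_le3[OF this] quad_bound[OF nz] show ?thesis by simp
qed

lemma fermat_ff:
  fixes a :: "'a::{finite,field}"
  assumes a0: "a \<noteq> 0"
  shows "a ^ (card (UNIV::'a set) - 1) = 1"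
proof -
  let ?S = "UNIV - {0::'a}"
  have fin: "finite ?S" by simp
  have cS: "card ?S = card (UNIV::'a set) - 1" by (simp add: card_Diff_subset)
  have bij: "bij_betw (\<lambda>x. a*x) ?S ?S"
    by (rule bij_betw_byWitness[where f'="\<lambda>x. x / a"]) (use a0 in auto)
  have "prod (\<lambda>x. a*x) ?S = prod id ?S"
    using prod.reindex_bij_betw[OF bij, of id] by simp
  moreover have "prod (\<lambda>x. a*x) ?S = a ^ card ?S * prod id ?S"
    by (simp add: prod.distrib)
  moreover have "prod id ?S \<noteq> 0" using fin by (simp add: prod_zero_iff)
  ultimately have "a ^ card ?S = 1" by simp
  then show ?thesis using cS by simp
qed

lemma omega_exists:
  assumes card: "card (UNIV :: 'a::{finite,field} set) = q" and q3: "q mod 3 = 1" and q4: "q \<ge> 4"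
  shows "\<exists>w::'a. w*w + w + 1 = 0 \<and> w \<noteq> 1"
proof -
  define n where "n = (q - 1) div 3"
  have n3: "3*n = q - 1" using q3 q4 unfolding n_def by presburger
  have n1: "n \<ge> 1" using n3 q4 by linarith
  have nlt: "n < q - 1" using n3 n1 by linarith
  let ?p = "monom (1::'a) n - 1"
  have cp: "coeff ?p n = 1" using n1 by simp
  then have p0: "?p \<noteq> 0" by (metis coeff_0 zero_neq_one)
  have dp: "degree ?p \<le> n"
    by (rule order.trans[OF degree_diff_le_max]) (simp add: degree_monom_le)
  have roots: "{x::'a. poly ?p x = 0} = {x. x^n = 1}" by (simp add: poly_monom)
  have "card {x::'a. x^n = 1} \<le> n" using card_poly_roots_bound[OF p0] dp roots by simp
  moreover have "card (UNIV - {0::'a}) = q - 1" using card by (simp add: card_Diff_subset)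
  ultimately have "\<not> (UNIV - {0::'a}) \<subseteq> {x. x^n = 1}"
    using nlt card_mono[of "{x::'a. x^n = 1}" "UNIV - {0}"] by auto
  then obtain a :: 'a where a0: "a \<noteq> 0" and an: "a^n \<noteq> 1" by auto
  define w where "w = a^n"
  have "w^3 = 1" using fermat_ff[OF a0] card n3 unfolding w_def
    by (simp add: power_mult[symmetric] mult.commute)
  then have "(w - 1)*(w*w + w + 1) = 0" by (simp add: algebra_simps power3_eq_cube)
  moreover have "w \<noteq> 1" using an w_def by simp
  ultimately show ?thesis by auto
qed

lemma fKri_inj:
  assumes "fKri K r i = fKri K' r' i'"
  shows "K = K' \<and> i = i' \<and> r = r'"
proof -
  have 1: "K = K'" using fun_cong[OF assms, of None] by (simp add: fKri_def)
  have "fKri K' r' i' (Some i) = None" using fun_cong[OF assms, of "Some i"] by (simp add: fKri_def)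
  then have 2: "i = i'" by (simp add: fKri_def split: if_splits)
  have "fKri K r i (Some (i+1)) = fKri K' r' i' (Some (i+1))" using assms by simp
  then have "r = r'" using 1 2 by (simp add: fKri_def)
  then show ?thesis using 1 2 by simp
qed

lemma fKri_neq:
  assumes "i \<noteq> j" shows "fKri K r i \<noteq> fKri K' s j"
  using fKri_inj assms by blast

lemma alg0:
  fixes a b r K :: "'a::field"
  assumes a0: "a \<noteq> 0" and b0: "b \<noteq> 0" and r0: "r \<noteq> 0"
  shows "((K + r/a) - (K + r/b))*(a - b) = r \<longleftrightarrow> (b-a)*b + a*a = 0"
proof -
  have 1: "((K + r/a) - (K + r/b))*(a - b) = r*((b-a)*(a-b))/(a*b)"
    using a0 b0 by (simp add: field_simps)
  have 2: "(b-a)*b + a*a = a*b - (b-a)*(a-b)" by (simp add: algebra_simps)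
  have ab: "a*b \<noteq> 0" using a0 b0 by simp
  have "r*((b-a)*(a-b))/(a*b) = r \<longleftrightarrow> r*((b-a)*(a-b)) = r*(a*b)"
    using ab by (simp add: divide_eq_eq mult.commute)
  also have "\<dots> \<longleftrightarrow> (b-a)*(a-b) = a*b" using r0 by simp
  also have "\<dots> \<longleftrightarrow> a*b - (b-a)*(a-b) = 0" by (metis right_minus_eq)
  finally show ?thesis unfolding 1 2 .
qed

lemma scale_fKri:
  "(\<lambda>z. map_option (\<lambda>y. c*y) (fKri K r i z)) = fKri (c*K) (c*r) i"
proof
  fix z show "map_option (\<lambda>y. c*y) (fKri K r i z) = fKri (c*K) (c*r) i z"
    by (cases z) (auto simp: fKri_def distrib_left)
qed

lemma scale_back:
  fixes c :: "'a::field"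
  assumes "c \<noteq> 0"
  shows "(\<lambda>z. map_option (\<lambda>y. (1/c)*y) (map_option (\<lambda>y. c*y) (u z))) = u"
proof
  fix z show "map_option (\<lambda>y. (1/c)*y) (map_option (\<lambda>y. c*y) (u z)) = u z"
    using assms by (cases "u z") auto
qed

lemma scale_back2:
  fixes c d :: "'a::field"
  assumes "d*c = 1"
  shows "(\<lambda>z. map_option (\<lambda>y. d*y) (map_option (\<lambda>y. c*y) (u z))) = u"
proof
  fix z show "map_option (\<lambda>y. d*y) (map_option (\<lambda>y. c*y) (u z)) = u z"
    using assms by (cases "u z") (auto simp: mult.assoc[symmetric])
qed

locale omg =
  fixes w :: "'a::{finite,field}"
  assumes c4: "card (UNIV::'a set) \<ge> 4" and w: "w*w + w + 1 = 0" and w1: "w \<noteq> 1"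
begin

lemma adj_ff:
  fixes K K' r s i j :: 'a
  assumes r0: "r \<noteq> 0" and s0: "s \<noteq> 0"
  shows "adjC (fKri K r i) (fKri K' s j) \<longleftrightarrow> (r = s \<and> i \<noteq> j \<and> (K-K')*(i-j) = r)"
proof
  assume a: "adjC (fKri K r i) (fKri K' s j)"
  then have c: "card (agree (fKri K r i) (fKri K' s j)) = 4" and ne: "fKri K r i \<noteq> fKri K' s j"
    using adjC_iff[OF c4] by auto
  show "r = s \<and> i \<noteq> j \<and> (K-K')*(i-j) = r"
  proof (rule ccontr)
    assume "\<not> (r = s \<and> i \<noteq> j \<and> (K-K')*(i-j) = r)"
    from agree_ff_le3[OF r0 s0 this ne] c show False by simp
  qed
next
  assume h: "r = s \<and> i \<noteq> j \<and> (K-K')*(i-j) = r"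
  then have "card (agree (fKri K r i) (fKri K' s j)) = 4"
    using agree_ff_4[OF r0 _ _ w w1] by auto
  moreover have "fKri K r i \<noteq> fKri K' s j" using h fKri_neq by blast
  ultimately show "adjC (fKri K r i) (fKri K' s j)"
    using adjC_iff[OF c4] fKri_PGL2 r0 s0 by blast
qed

lemma adj_aff:
  assumes al: "al \<noteq> 0"
  shows "\<not> adjC (aff al be) (\<sigma>::'a option \<Rightarrow> 'a option)"
proof
  assume a: "adjC (aff al be) \<sigma>"
  then have s: "\<sigma> \<in> PGL2" and c: "card (agree (aff al be) \<sigma>) = 4" and ne: "aff al be \<noteq> \<sigma>"
    using adjC_iff[OF c4] by auto
  from PGL2_cases[OF s] show False
  proof
    assume "\<exists>ga de. ga \<noteq> 0 \<and> \<sigma> = aff ga de"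
    then obtain ga de where "\<sigma> = aff ga de" by blast
    then show False using agree_aff_aff_le3[of al be ga de] c ne by simp
  next
    assume "\<exists>K r i. r \<noteq> 0 \<and> \<sigma> = fKri K r i"
    then obtain K r i where "\<sigma> = fKri K r i" by blast
    then show False using agree_aff_f_le3[OF al, of be K r i] c by simp
  qed
qed

lemma adj_PGL2_f:
  assumes "adjC (u::'a option \<Rightarrow> 'a option) v"
  shows "\<exists>K r i. r \<noteq> 0 \<and> v = fKri K r i"
proof -
  have "v \<in> PGL2" using assms unfolding adjC_def by simp
  from PGL2_cases[OF this] show ?thesis
  proof
    assume "\<exists>al be. al \<noteq> 0 \<and> v = aff al be"
    then obtain al be where "al \<noteq> 0" "v = aff al be" by blast
    then show ?thesis using adj_aff assms adjC_sym by metis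
  qed
qed

definition W :: "'a \<Rightarrow> 'a \<Rightarrow> 'a \<Rightarrow> 'a \<Rightarrow> 'a option \<Rightarrow> 'a option" where
  "W K r i j = fKri (K + r/(j-i)) r j"

lemma nbhd_f:
  fixes K r i :: 'a
  assumes r0: "r \<noteq> 0"
  shows "{u. adjC (fKri K r i) u} = W K r i ` (UNIV - {i})"
proof (rule set_eqI)
  fix u
  show "u \<in> {u. adjC (fKri K r i) u} \<longleftrightarrow> u \<in> W K r i ` (UNIV - {i})"
  proof
    assume "u \<in> {u. adjC (fKri K r i) u}"
    then have a: "adjC (fKri K r i) u" by simp
    obtain K' s j where s0: "s \<noteq> 0" and u: "u = fKri K' s j" using adj_PGL2_f[OF a] by blast
    from a[unfolded u adj_ff[OF r0 s0]] have "r = s" "i \<noteq> j" "(K-K')*(i-j) = r" by auto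
    moreover then have "K' = K + r/(j-i)" by (simp add: field_simps)
    ultimately show "u \<in> W K r i ` (UNIV - {i})" using u unfolding W_def by auto
  next
    assume "u \<in> W K r i ` (UNIV - {i})"
    then obtain j where j: "j \<noteq> i" "u = W K r i j" by auto
    have "(K - (K + r/(j-i)))*(i-j) = r" using j by (simp add: field_simps)
    then show "u \<in> {u. adjC (fKri K r i) u}" using j adj_ff[OF r0 r0] unfolding W_def by auto
  qed
qed

lemma card_nbhd_f:
  fixes K r i :: 'a
  assumes r0: "r \<noteq> 0"
  shows "card {u. adjC (fKri K r i) u} = card (UNIV::'a set) - 1"
proof -
  have "inj_on (W K r i) (UNIV - {i})"
    by (rule inj_onI) (auto simp: W_def dest: fKri_inj)
  then show ?thesis unfolding nbhd_f[OF r0] by (simp add: card_image card_Diff_subset)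
qed

lemma adj_W:
  fixes K r i j k :: 'a
  assumes r0: "r \<noteq> 0" and ji: "j \<noteq> i" and ki: "k \<noteq> i"
  shows "adjC (W K r i j) (W K r i k) \<longleftrightarrow> (k = i - w*(j-i) \<or> k = i - w*w*(j-i))"
proof -
  define a where "a = j - i"
  define b where "b = k - i"
  have a0: "a \<noteq> 0" and b0: "b \<noteq> 0" using ji ki a_def b_def by auto
  have jk: "j - k = a - b" using a_def b_def by simp
  have "adjC (W K r i j) (W K r i k) \<longleftrightarrow> j \<noteq> k \<and> ((K + r/a) - (K + r/b))*(a - b) = r"
    unfolding W_def adj_ff[OF r0 r0] a_def b_def by (simp add: algebra_simps)
  also have "\<dots> \<longleftrightarrow> ((K + r/a) - (K + r/b))*(a - b) = r"
    using r0 jk by auto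
  also have "\<dots> \<longleftrightarrow> (b-a)*b + a*a = 0" by (rule alg0[OF a0 b0 r0])
  also have "(b-a)*b + a*a = (b + w*a)*(b + w*w*a)" using omega_fact[OF w, of b a] by simp
  also have "(b + w*a)*(b + w*w*a) = 0 \<longleftrightarrow> b + w*a = 0 \<or> b + w*w*a = 0" by (rule mult_eq_0_iff)
  also have "\<dots> \<longleftrightarrow> (k = i - w*(j-i) \<or> k = i - w*w*(j-i))"
  proof -
    have aux: "(b + t = 0) = (k = i - t)" for t
    proof -
      have "b + t = k - (i - t)" using b_def by (simp add: algebra_simps)
      then show ?thesis by (metis right_minus_eq)
    qed
    show ?thesis using aux a_def by simp
  qed
  finally show ?thesis .
qed

end

theorem theorem13:
  fixes q p m :: nat
  assumes card: "card (UNIV :: 'a::{finite,field} set) = q"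
    and qpm: "q = p ^ m" and pp: "prime p" and podd: "odd p"
    and q3: "q mod 3 = 1" and q13: "q \<ge> 13"
  shows
    "(\<forall>(r::'a) (s::'a). r \<noteq> 0 \<longrightarrow> s \<noteq> 0 \<longrightarrow>
        (\<exists>\<phi>. bij_betw \<phi> (Pr r) (Pr s) \<and>
              (\<forall>u\<in>Pr r. \<forall>v\<in>Pr r. adjC u v \<longleftrightarrow> adjC (\<phi> u) (\<phi> v))))
     \<and> (\<forall>(r::'a) i j. r \<noteq> 0 \<longrightarrow> i \<noteq> j \<longrightarrow>
          (\<forall>u\<in>Bir i r. \<forall>v\<in>Bir i r. \<not> adjC u v) \<and>
          (\<forall>u\<in>Bir j r. \<forall>v\<in>Bir j r. \<not> adjC u v) \<and>
          (\<forall>u\<in>Bir i r. \<exists>!v. v \<in> Bir j r \<and> adjC u v) \<and>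
          (\<forall>v\<in>Bir j r. \<exists>!u. u \<in> Bir i r \<and> adjC u v))
     \<and> (\<forall>r::'a. r \<noteq> 0 \<longrightarrow> (\<forall>v\<in>Pr r. card {u\<in>Pr r. adjC v u} = q - 1))
     \<and> (\<forall>v::'a option \<Rightarrow> 'a option. v \<in> PGL2 \<and> nbhd v \<noteq> {} \<longrightarrow>
          (\<forall>w\<in>nbhd v. card {u\<in>nbhd v. adjC w u} = 2))"
proof -
  have c4: "card (UNIV::'a set) \<ge> 4" using card q13 by simp
  obtain w :: 'a where w: "w*w + w + 1 = 0" and w1: "w \<noteq> 1"
    using omega_exists[OF card q3] q13 by auto
  interpret O: omg w using c4 w w1 by unfold_locales auto
  have A: "\<forall>(r::'a) (s::'a). r \<noteq> 0 \<longrightarrow> s \<noteq> 0 \<longrightarrow>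
        (\<exists>\<phi>. bij_betw \<phi> (Pr r) (Pr s) \<and>
              (\<forall>u\<in>Pr r. \<forall>v\<in>Pr r. adjC u v \<longleftrightarrow> adjC (\<phi> u) (\<phi> v)))"
  proof (intro allI impI)
    fix r s :: 'a assume r0: "r \<noteq> 0" and s0: "s \<noteq> 0"
    define c where "c = s/r"
    have c0: "c \<noteq> 0" using r0 s0 c_def by simp
    have cr: "c*r = s" using r0 c_def by simp
    have cs: "(1/c)*s = r" using r0 s0 c_def by simp
    define \<phi> where "\<phi> = (\<lambda>(u::'a option \<Rightarrow> 'a option) z. map_option (\<lambda>y. c*y) (u z))"
    define \<psi> where "\<psi> = (\<lambda>(u::'a option \<Rightarrow> 'a option) z. map_option (\<lambda>y. (1/c)*y) (u z))"
    have phiF: "\<phi> (fKri K r i) = fKri (c*K) s i" for K i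
      unfolding \<phi>_def scale_fKri cr ..
    have psiF: "\<psi> (fKri K s i) = fKri ((1/c)*K) r i" for K i
      unfolding \<psi>_def scale_fKri cs ..
    have bij: "bij_betw \<phi> (Pr r) (Pr s)"
    proof (rule bij_betw_byWitness[where f'=\<psi>])
      have e1: "(1/c)*c = 1" "c*(1/c) = 1" using c0 by auto
      show "\<forall>a\<in>Pr r. \<psi> (\<phi> a) = a" unfolding \<phi>_def \<psi>_def
        by (intro ballI) (rule scale_back2[OF e1(1)])
      show "\<forall>a\<in>Pr s. \<phi> (\<psi> a) = a" unfolding \<phi>_def \<psi>_def
        by (intro ballI) (rule scale_back2[OF e1(2)])
      show "\<phi> ` Pr r \<subseteq> Pr s" unfolding Pr_def using phiF by auto
      show "\<psi> ` Pr s \<subseteq> Pr r" unfolding Pr_def using psiF by auto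
    qed
    moreover have "\<forall>u\<in>Pr r. \<forall>v\<in>Pr r. adjC u v \<longleftrightarrow> adjC (\<phi> u) (\<phi> v)"
    proof (intro ballI)
      fix u v assume "u \<in> Pr r" "v \<in> Pr r"
      then obtain K i K' j where u: "u = fKri K r i" and v: "v = fKri K' r j"
        unfolding Pr_def by auto
      have "(c*K - c*K')*(i-j) = s \<longleftrightarrow> c*((K-K')*(i-j)) = c*r"
        using cr by (simp add: algebra_simps)
      also have "\<dots> \<longleftrightarrow> (K-K')*(i-j) = r" using c0 by simp
      finally show "adjC u v \<longleftrightarrow> adjC (\<phi> u) (\<phi> v)"
        unfolding u v phiF O.adj_ff[OF r0 r0] O.adj_ff[OF s0 s0] by simp
    qed
    ultimately show "\<exists>\<phi>. bij_betw \<phi> (Pr r) (Pr s) \<and>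
              (\<forall>u\<in>Pr r. \<forall>v\<in>Pr r. adjC u v \<longleftrightarrow> adjC (\<phi> u) (\<phi> v))" by blast
  qed
  have B: "\<forall>(r::'a) i j. r \<noteq> 0 \<longrightarrow> i \<noteq> j \<longrightarrow>
          (\<forall>u\<in>Bir i r. \<forall>v\<in>Bir i r. \<not> adjC u v) \<and>
          (\<forall>u\<in>Bir j r. \<forall>v\<in>Bir j r. \<not> adjC u v) \<and>
          (\<forall>u\<in>Bir i r. \<exists>!v. v \<in> Bir j r \<and> adjC u v) \<and>
          (\<forall>v\<in>Bir j r. \<exists>!u. u \<in> Bir i r \<and> adjC u v)"
  proof (intro allI impI)
    fix r i j :: 'a assume r0: "r \<noteq> 0" and ij: "i \<noteq> j"
    have same: "\<forall>u\<in>Bir k r. \<forall>v\<in>Bir k r. \<not> adjC u v" for k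
      unfolding Bir_def using O.adj_ff[OF r0 r0] by auto
    have ij': "i - j \<noteq> 0" using ij by simp
    have m1: "\<forall>u\<in>Bir i r. \<exists>!v. v \<in> Bir j r \<and> adjC u v"
    proof
      fix u assume "u \<in> Bir i r"
      then obtain a where u: "u = fKri a r i" unfolding Bir_def by auto
      have ex: "fKri (a - r/(i-j)) r j \<in> Bir j r \<and> adjC u (fKri (a - r/(i-j)) r j)"
        unfolding u O.adj_ff[OF r0 r0] Bir_def using ij ij' by auto
      show "\<exists>!v. v \<in> Bir j r \<and> adjC u v"
      proof (rule ex1I[where a="fKri (a - r/(i-j)) r j"])
        show "fKri (a - r/(i-j)) r j \<in> Bir j r \<and> adjC u (fKri (a - r/(i-j)) r j)" by (rule ex)
      next
        fix v assume "v \<in> Bir j r \<and> adjC u v"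
        then obtain b where v: "v = fKri b r j" and "(a - b)*(i-j) = r"
          unfolding Bir_def u using O.adj_ff[OF r0 r0] by auto
        then have "b = a - r/(i-j)" using ij' by (simp add: field_simps)
        then show "v = fKri (a - r/(i-j)) r j" using v by simp
      qed
    qed
    have m2: "\<forall>v\<in>Bir j r. \<exists>!u. u \<in> Bir i r \<and> adjC u v"
    proof
      fix v assume "v \<in> Bir j r"
      then obtain b where v: "v = fKri b r j" unfolding Bir_def by auto
      have ex: "fKri (b + r/(i-j)) r i \<in> Bir i r \<and> adjC (fKri (b + r/(i-j)) r i) v"
        unfolding v O.adj_ff[OF r0 r0] Bir_def using ij ij' by auto
      show "\<exists>!u. u \<in> Bir i r \<and> adjC u v"
      proof (rule ex1I[where a="fKri (b + r/(i-j)) r i"])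
        show "fKri (b + r/(i-j)) r i \<in> Bir i r \<and> adjC (fKri (b + r/(i-j)) r i) v" by (rule ex)
      next
        fix u assume "u \<in> Bir i r \<and> adjC u v"
        then obtain a where u: "u = fKri a r i" and "(a - b)*(i-j) = r"
          unfolding Bir_def v using O.adj_ff[OF r0 r0] by auto
        then have "a = b + r/(i-j)" using ij' by (simp add: field_simps)
        then show "u = fKri (b + r/(i-j)) r i" using u by simp
      qed
    qed
    show "(\<forall>u\<in>Bir i r. \<forall>v\<in>Bir i r. \<not> adjC u v) \<and>
          (\<forall>u\<in>Bir j r. \<forall>v\<in>Bir j r. \<not> adjC u v) \<and>
          (\<forall>u\<in>Bir i r. \<exists>!v. v \<in> Bir j r \<and> adjC u v) \<and>
          (\<forall>v\<in>Bir j r. \<exists>!u. u \<in> Bir i r \<and> adjC u v)"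
      using same m1 m2 by blast
  qed
  have C: "\<forall>r::'a. r \<noteq> 0 \<longrightarrow> (\<forall>v\<in>Pr r. card {u\<in>Pr r. adjC v u} = q - 1)"
  proof (intro allI impI ballI)
    fix r :: 'a and v assume r0: "r \<noteq> 0" and "v \<in> Pr r"
    then obtain K i where v: "v = fKri K r i" unfolding Pr_def by auto
    have "{u. adjC v u} \<subseteq> Pr r"
      unfolding v O.nbhd_f[OF r0] O.W_def Pr_def by auto
    then have "{u\<in>Pr r. adjC v u} = {u. adjC v u}" by auto
    then show "card {u\<in>Pr r. adjC v u} = q - 1" using O.card_nbhd_f[OF r0] v card by simp
  qed
  have D: "\<forall>v::'a option \<Rightarrow> 'a option. v \<in> PGL2 \<and> nbhd v \<noteq> {} \<longrightarrow>
          (\<forall>x\<in>nbhd v. card {u\<in>nbhd v. adjC x u} = 2)"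
  proof (intro allI impI ballI)
    fix v x :: "'a option \<Rightarrow> 'a option"
    assume h: "v \<in> PGL2 \<and> nbhd v \<noteq> {}" and x: "x \<in> nbhd v"
    then obtain u where "adjC v u" unfolding nbhd_def by auto
    then have "adjC u v" using adjC_sym by blast
    then obtain K r i where r0: "r \<noteq> 0" and v: "v = fKri K r i" using O.adj_PGL2_f by blast
    have N: "nbhd v = O.W K r i ` (UNIV - {i})" unfolding nbhd_def v O.nbhd_f[OF r0] ..
    then obtain j where ji: "j \<noteq> i" and xj: "x = O.W K r i j" using x by auto
    define k1 where "k1 = i - w*(j-i)"
    define k2 where "k2 = i - w*w*(j-i)"
    have w0: "w \<noteq> 0" using w by auto
    have ww: "w \<noteq> w*w"
    proof
      assume "w = w*w" then have "w*(w - 1) = 0" by (simp add: algebra_simps)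
      then show False using w0 w1 by simp
    qed
    have ji': "j - i \<noteq> 0" using ji by simp
    have k1i: "k1 \<noteq> i" using w0 ji' k1_def by simp
    have k2i: "k2 \<noteq> i" using w0 ji' k2_def by simp
    have k12: "k1 \<noteq> k2"
    proof
      assume "k1 = k2"
      then have "(w - w*w)*(j-i) = 0" unfolding k1_def k2_def by (simp add: algebra_simps)
      then show False using ww ji' by simp
    qed
    have "{u\<in>nbhd v. adjC x u} = {O.W K r i k1, O.W K r i k2}"
    proof (rule set_eqI)
      fix u
      show "u \<in> {u\<in>nbhd v. adjC x u} \<longleftrightarrow> u \<in> {O.W K r i k1, O.W K r i k2}"
      proof
        assume "u \<in> {u\<in>nbhd v. adjC x u}"
        then obtain k where ki: "k \<noteq> i" and uk: "u = O.W K r i k" and a: "adjC x u"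
          unfolding N by auto
        then have "k = k1 \<or> k = k2" using O.adj_W[OF r0 ji ki] xj k1_def k2_def by simp
        then show "u \<in> {O.W K r i k1, O.W K r i k2}" using uk by auto
      next
        assume "u \<in> {O.W K r i k1, O.W K r i k2}"
        then show "u \<in> {u\<in>nbhd v. adjC x u}"
          unfolding N xj using O.adj_W[OF r0 ji k1i] O.adj_W[OF r0 ji k2i] k1i k2i k1_def k2_def
          by auto
      qed
    qed
    moreover have "O.W K r i k1 \<noteq> O.W K r i k2"
      unfolding O.W_def using fKri_neq[OF k12] by blast
    ultimately show "card {u\<in>nbhd v. adjC x u} = 2" by simp
  qed
  show ?thesis using A B C D by blast
qed

end
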